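(* A set $\mathscr{S}\subset\mathbb{R}^n$ is a closed semilinear real tropical cone if and only if there exists a semilinear, monotone, homogeneous operator $F:\mathbb{R}^n\to\mathbb{R}^n$ such that $\mathscr{S}=\{x\in\mathbb{R}^n: x\le F(x)\}$.
   Context: A set $X\subset\mathbb{R}^n$ is a real tropical cone if for all $x,y\in X$ and all $\lambda,\mu\in\mathbb{R}$, the coordinatewise maximum $\max(\lambda+x,\mu+y)$ belongs to $X$ (the empty set qualifies). A subset of $\mathbb{R}^d$ is semilinear if it is a finite union of sets $\{x: \langle A_i,x\rangle>b_i\ (i\le p),\ \langle A_i,x\rangle=b_i\ (p<i\le q)\}$ with $A$ rational and $b$ real; a function is semilinear if its graph is semilinear. $F$ is monotone if $x\le y$ implies $F(x)\le F(y)$ (coordinatewise order), and homogeneous if $F(\lambda+x)=\lambda+F(x)$ for all $\lambda\in\mathbb{R}$, $x\in\mathbb{R}^n$. *)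

theory Defs
  imports "HOL-Analysis.Analysis"
begin

definition scal_add :: "real \<Rightarrow> real ^ 'n \<Rightarrow> real ^ 'n" where
  "scal_add c x = (\<chi> i. c + x $ i)"

definition tropical_cone :: "(real ^ 'n) set \<Rightarrow> bool" where
  "tropical_cone X \<longleftrightarrow>
     (\<forall>x\<in>X. \<forall>y\<in>X. \<forall>a b :: real.
        (\<chi> i. max (a + x $ i) (b + y $ i)) \<in> X)"

definition basic_semilinear ::
  "(('i::finite \<Rightarrow> rat) \<times> real) list \<Rightarrow> (('i \<Rightarrow> rat) \<times> real) list \<Rightarrow> (real ^ 'i) set" where
  "basic_semilinear P Q =
     {x. (\<forall>(a, b) \<in> set P. (\<Sum>j\<in>UNIV. of_rat (a j) * x $ j) > b) \<and>
         (\<forall>(a, b) \<in> set Q. (\<Sum>j\<in>UNIV. of_rat (a j) * x $ j) = b)}"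

definition semilinear_set :: "(real ^ 'i::finite) set \<Rightarrow> bool" where
  "semilinear_set S \<longleftrightarrow>
     (\<exists>L :: ((('i \<Rightarrow> rat) \<times> real) list \<times> (('i \<Rightarrow> rat) \<times> real) list) list.
        S = (\<Union>(P, Q) \<in> set L. basic_semilinear P Q))"

text \<open>Graph of F as a subset of R^(n+n): first copy = argument, second copy = value.\<close>
definition graph_vec :: "(real ^ 'n \<Rightarrow> real ^ 'n) \<Rightarrow> (real ^ ('n + 'n)) set" where
  "graph_vec F = {z. (\<chi> i. z $ Inr i) = F (\<chi> i. z $ Inl i)}"

definition semilinear_fun :: "(real ^ 'n::finite \<Rightarrow> real ^ 'n) \<Rightarrow> bool" where
  "semilinear_fun F \<longleftrightarrow> semilinear_set (graph_vec F)"

definition homogeneous_op :: "(real ^ 'n \<Rightarrow> real ^ 'n) \<Rightarrow> bool" where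
  "homogeneous_op F \<longleftrightarrow> (\<forall>c x. F (scal_add c x) = scal_add c (F x))"

end

theory Submission
  imports Defs
begin

type_synonym 'v lcons = "('v \<Rightarrow> rat) \<times> real"

definition lf :: "('v::finite \<Rightarrow> rat) \<Rightarrow> ('v \<Rightarrow> real) \<Rightarrow> real" where
  "lf a f = (\<Sum>v\<in>UNIV. of_rat (a v) * f v)"

definition bas :: "('v::finite lcons) list \<Rightarrow> 'v lcons list \<Rightarrow> ('v \<Rightarrow> real) set" where
  "bas P Q = {f. (\<forall>(a,b)\<in>set P. lf a f > b) \<and> (\<forall>(a,b)\<in>set Q. lf a f = b)}"

definition SL :: "('v::finite \<Rightarrow> real) set \<Rightarrow> bool" where
  "SL T \<longleftrightarrow> (\<exists>L. T = (\<Union>x\<in>set L. bas (fst x) (snd x)))"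

lemma lf_lin: "lf (\<lambda>u. r1 * a1 u + r2 * a2 u) f = of_rat r1 * lf a1 f + of_rat r2 * lf a2 f"
  unfolding lf_def by (simp add: of_rat_add of_rat_mult sum.distrib sum_distrib_left algebra_simps)

lemma lf_neg: "lf (\<lambda>u. - a u) f = - lf a f"
  unfolding lf_def by (simp add: of_rat_minus sum_negf)

lemma lf_upd: "lf a (f(v:=t)) = lf (a(v:=0)) f + of_rat (a v) * t"
proof -
  have "lf a (f(v:=t)) = of_rat (a v) * t + (\<Sum>u\<in>UNIV-{v}. of_rat (a u) * f u)"
    unfolding lf_def by (subst sum.remove[of _ v]) auto
  moreover have "lf (a(v:=0)) f = (\<Sum>u\<in>UNIV-{v}. of_rat (a u) * f u)"
    unfolding lf_def by (subst sum.remove[of _ v]) auto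
  ultimately show ?thesis by simp
qed

lemma lf_unit: "lf (\<lambda>u. if u = w then 1 else 0) f = f w"
proof -
  have eq: "(\<lambda>v. of_rat (if v = w then 1 else 0) * f v) = (\<lambda>v. if v = w then f v else 0)" by auto
  show ?thesis unfolding lf_def eq by simp
qed

lemma lf_comp: "lf a (f \<circ> \<sigma>) = lf (\<lambda>w. \<Sum>v\<in>{v. \<sigma> v = w}. a v) f"
proof -
  have "lf a (f \<circ> \<sigma>) = (\<Sum>w\<in>UNIV. \<Sum>v\<in>{v\<in>UNIV. \<sigma> v = w}. of_rat (a v) * f (\<sigma> v))"
    unfolding lf_def by (subst sum.group[symmetric, of UNIV UNIV \<sigma>]) auto
  also have "\<dots> = (\<Sum>w\<in>UNIV. \<Sum>v\<in>{v. \<sigma> v = w}. of_rat (a v) * f w)"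
    by (intro sum.cong refl) auto
  also have "\<dots> = lf (\<lambda>w. \<Sum>v\<in>{v. \<sigma> v = w}. a v) f"
    unfolding lf_def by (simp add: of_rat_sum sum_distrib_right)
  finally show ?thesis .
qed

lemma SL_bas: "SL (bas P Q)"
  unfolding SL_def by (rule exI[of _ "[(P,Q)]"]) simp

lemma SL_empty: "SL {}"
  unfolding SL_def by (rule exI[of _ "[]"]) simp

lemma bas_nil: "bas [] [] = UNIV" unfolding bas_def by simp

lemma SL_UNIV: "SL UNIV" using SL_bas[of "[]" "[]"] by (simp add: bas_nil)

lemma SL_Un: assumes "SL A" "SL B" shows "SL (A \<union> B)"
proof -
  obtain L1 L2 where A: "A = (\<Union>x\<in>set L1. bas (fst x) (snd x))" and B: "B = (\<Union>x\<in>set L2. bas (fst x) (snd x))"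
    using assms unfolding SL_def by blast
  have "A \<union> B = (\<Union>x\<in>set (L1 @ L2). bas (fst x) (snd x))" unfolding A B by simp
  then show ?thesis unfolding SL_def by blast
qed

lemma bas_Int: "bas P1 Q1 \<inter> bas P2 Q2 = bas (P1@P2) (Q1@Q2)"
  unfolding bas_def set_append ball_Un by auto

lemma SL_Int: assumes "SL A" "SL B" shows "SL (A \<inter> B)"
proof -
  obtain L1 L2 where A: "A = (\<Union>x\<in>set L1. bas (fst x) (snd x))" and B: "B = (\<Union>x\<in>set L2. bas (fst x) (snd x))"
    using assms unfolding SL_def by blast
  let ?L = "map (\<lambda>z. (fst (fst z) @ fst (snd z), snd (fst z) @ snd (snd z))) (List.product L1 L2)"
  have "A \<inter> B = (\<Union>x\<in>set ?L. bas (fst x) (snd x))"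
  proof (rule set_eqI)
    fix f
    show "f \<in> A \<inter> B \<longleftrightarrow> f \<in> (\<Union>x\<in>set ?L. bas (fst x) (snd x))"
    proof
      assume "f \<in> A \<inter> B"
      then obtain x y where "x \<in> set L1" "y \<in> set L2" "f \<in> bas (fst x) (snd x)" "f \<in> bas (fst y) (snd y)"
        unfolding A B by blast
      then show "f \<in> (\<Union>x\<in>set ?L. bas (fst x) (snd x))"
        by (intro UN_I[of "(fst x @ fst y, snd x @ snd y)"]) (auto simp: bas_Int[symmetric] intro!: image_eqI[of _ _ "(x,y)"])
    next
      assume "f \<in> (\<Union>x\<in>set ?L. bas (fst x) (snd x))"
      then obtain x y where "x \<in> set L1" "y \<in> set L2" "f \<in> bas (fst x @ fst y) (snd x @ snd y)"
        by auto
      then show "f \<in> A \<inter> B" unfolding A B by (auto simp: bas_Int[symmetric])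
    qed
  qed
  then show ?thesis unfolding SL_def by blast
qed

lemma SL_gt: "SL {f. lf a f > b}"
  using SL_bas[of "[(a,b)]" "[]"] by (simp add: bas_def)

lemma SL_eq: "SL {f. lf a f = b}"
  using SL_bas[of "[]" "[(a,b)]"] by (simp add: bas_def)

lemma SL_ge: "SL {f. lf a f \<ge> b}"
proof -
  have "{f. lf a f \<ge> b} = {f. lf a f > b} \<union> {f. lf a f = b}" by auto
  then show ?thesis using SL_Un[OF SL_gt SL_eq] by simp
qed

lemma SL_lt: "SL {f. lf a f < b}"
proof -
  have "{f. lf a f < b} = {f. lf (\<lambda>u. - a u) f > - b}" by (auto simp: lf_neg)
  then show ?thesis using SL_gt by simp
qed

lemma SL_le: "SL {f. lf a f \<le> b}"
proof -
  have "{f. lf a f \<le> b} = {f. lf (\<lambda>u. - a u) f \<ge> - b}" by (auto simp: lf_neg)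
  then show ?thesis using SL_ge by simp
qed

lemma SL_ne: "SL {f. lf a f \<noteq> b}"
proof -
  have "{f. lf a f \<noteq> b} = {f. lf a f > b} \<union> {f. lf a f < b}" by auto
  then show ?thesis using SL_Un[OF SL_gt SL_lt] by simp
qed

lemma SL_compl_bas: "SL (- bas P Q)"
proof (induction P)
  case Nil
  show ?case
  proof (induction Q)
    case Nil then show ?case by (simp add: bas_nil SL_empty)
  next
    case (Cons q Q)
    obtain a b where q: "q = (a,b)" by force
    have "- bas [] (q#Q) = {f. lf a f \<noteq> b} \<union> - bas [] Q" unfolding q bas_def by auto
    then show ?case using SL_Un[OF SL_ne Cons] by simp
  qed
next
  case (Cons p P)
  obtain a b where p: "p = (a,b)" by force
  have "- bas (p#P) Q = {f. lf a f \<le> b} \<union> - bas P Q" unfolding p bas_def by auto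
  then show ?case using SL_Un[OF SL_le Cons] by simp
qed

lemma SL_compl: assumes "SL A" shows "SL (- A)"
proof -
  obtain L where A: "A = (\<Union>x\<in>set L. bas (fst x) (snd x))" using assms unfolding SL_def by blast
  have "SL (- (\<Union>x\<in>set L. bas (fst x) (snd x)))"
  proof (induction L)
    case Nil then show ?case by (simp add: SL_UNIV)
  next
    case (Cons x L)
    obtain P Q where x: "x = (P,Q)" by force
    have "- (\<Union>x\<in>set (x#L). bas (fst x) (snd x)) = - bas P Q \<inter> - (\<Union>x\<in>set L. bas (fst x) (snd x))"
      unfolding x by auto
    then show ?case using SL_Int[OF SL_compl_bas Cons] by simp
  qed
  then show ?thesis using A by simp
qed

lemma SL_Diff: "SL A \<Longrightarrow> SL B \<Longrightarrow> SL (A - B)"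
  by (simp add: Diff_eq SL_Int SL_compl)

lemma SL_INT: "finite I \<Longrightarrow> (\<And>i. i \<in> I \<Longrightarrow> SL (T i)) \<Longrightarrow> SL (\<Inter>i\<in>I. T i)"
  by (induction I rule: finite_induct) (auto simp: SL_UNIV intro: SL_Int)

lemma SL_var_le: "SL {f. f v \<le> f w}"
proof -
  have "{f. f v \<le> f w} = {f. lf (\<lambda>u. 1 * (\<lambda>u. if u = w then 1 else 0) u + (-1) * (\<lambda>u. if u = v then 1 else 0) u) f \<ge> 0}"
    by (simp only: lf_lin lf_unit) auto
  then show ?thesis using SL_ge by simp
qed

lemma SL_var_eq_plus: "SL {f. f v = f w + c}"
proof -
  have "{f. f v = f w + c} = {f. lf (\<lambda>u. 1 * (\<lambda>u. if u = v then 1 else 0) u + (-1) * (\<lambda>u. if u = w then 1 else 0) u) f = c}"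
    by (simp only: lf_lin lf_unit) auto
  then show ?thesis using SL_eq by simp
qed

lemma SL_comp: assumes "SL T" shows "SL {f. f \<circ> \<sigma> \<in> T}"
proof -
  obtain L where T: "T = (\<Union>x\<in>set L. bas (fst x) (snd x))" using assms unfolding SL_def by blast
  define tr where "tr = (\<lambda>c::('a \<Rightarrow> rat) \<times> real. ((\<lambda>w. \<Sum>v\<in>{v. \<sigma> v = w}. fst c v), snd c))"
  have *: "{f. f \<circ> \<sigma> \<in> bas P Q} = bas (map tr P) (map tr Q)" for P Q
    unfolding bas_def tr_def by (auto simp: lf_comp split_beta)
  have "{f. f \<circ> \<sigma> \<in> T} = (\<Union>x\<in>set (map (\<lambda>x. (map tr (fst x), map tr (snd x))) L). bas (fst x) (snd x))"
    unfolding T using * by auto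
  then show ?thesis unfolding SL_def by blast
qed

lemma mem_bas: "f \<in> bas P Q \<longleftrightarrow> (\<forall>c\<in>set P. lf (fst c) f > snd c) \<and> (\<forall>c\<in>set Q. lf (fst c) f = snd c)"
  unfolding bas_def by (auto simp: split_beta)

lemma exists_between:
  fixes A B :: "real set"
  assumes "finite A" "finite B" "\<forall>l\<in>A. \<forall>u\<in>B. l < u"
  shows "\<exists>t. (\<forall>l\<in>A. l < t) \<and> (\<forall>u\<in>B. t < u)"
proof (cases "A = {}")
  case True
  show ?thesis
  proof (cases "B = {}")
    case True with \<open>A = {}\<close> show ?thesis by auto
  next
    case False
    then show ?thesis using \<open>A = {}\<close> assms(2) by (intro exI[of _ "Min B - 1"]) (auto dest: Min_le)
  qed
next
  case False
  show ?thesis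
  proof (cases "B = {}")
    case True
    then show ?thesis using False assms(1) by (intro exI[of _ "Max A + 1"]) (auto dest: Max_ge)
  next
    case F2: False
    have "Max A < Min B" using assms False F2 by auto
    show ?thesis
    proof (intro exI[of _ "(Max A + Min B) / 2"] conjI ballI)
      fix l assume "l \<in> A"
      then have "l \<le> Max A" using assms(1) by simp
      then show "l < (Max A + Min B) / 2" using \<open>Max A < Min B\<close> by (simp add: field_simps)
    next
      fix u assume "u \<in> B"
      then have "Min B \<le> u" using assms(2) by simp
      then show "(Max A + Min B) / 2 < u" using \<open>Max A < Min B\<close> by (simp add: field_simps)
    qed
  qed
qed

lemma SL_UN_list: "(\<And>x. x \<in> set L \<Longrightarrow> SL (g x)) \<Longrightarrow> SL (\<Union>x\<in>set L. g x)"
  by (induction L) (auto simp: SL_empty intro: SL_Un)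

lemma SL_ex1_bas: "SL {f. \<exists>t. f(v:=t) \<in> bas P Q}"
proof (cases "\<exists>c\<in>set Q. fst c v \<noteq> 0")
  case True
  then obtain a b where ab: "(a,b) \<in> set Q" "a v \<noteq> 0" by auto
  define sub where "sub = (\<lambda>c::('a \<Rightarrow> rat) \<times> real.
      ((\<lambda>u. 1 * ((fst c)(v:=0)) u + (- (fst c v / a v)) * (a(v:=0)) u), snd c - of_rat (fst c v / a v) * b))"
  define t0 where "t0 = (\<lambda>f. (b - lf (a(v:=0)) f) / of_rat (a v))"
  have lsub: "lf (fst (sub c)) f = lf ((fst c)(v:=0)) f - of_rat (fst c v / a v) * lf (a(v:=0)) f" for c f
    unfolding sub_def by (simp only: fst_conv lf_lin) (simp add: of_rat_minus fun_upd_def)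
  have key: "lf (fst c) (f(v:=t0 f)) - snd c = lf (fst (sub c)) f - snd (sub c)" for c f
    unfolding lsub unfolding sub_def t0_def lf_upd using ab(2)
    by (simp add: of_rat_divide field_simps)
  have t0: "t = t0 f" if "f(v:=t) \<in> bas P Q" for f t
  proof -
    have "lf a (f(v:=t)) = b" using that ab(1) unfolding mem_bas by force
    then show ?thesis unfolding t0_def lf_upd using ab(2) by (simp add: field_simps)
  qed
  have eq: "f(v:=t0 f) \<in> bas P Q \<longleftrightarrow> f \<in> bas (map sub P) (map sub Q)" for f
  proof -
    have g: "lf (fst c) (f(v:=t0 f)) > snd c \<longleftrightarrow> lf (fst (sub c)) f > snd (sub c)" for c
      using key[of c f] by linarith
    have e: "lf (fst c) (f(v:=t0 f)) = snd c \<longleftrightarrow> lf (fst (sub c)) f = snd (sub c)" for c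
      using key[of c f] by linarith
    show ?thesis unfolding mem_bas using g e by simp
  qed
  have "{f. \<exists>t. f(v:=t) \<in> bas P Q} = bas (map sub P) (map sub Q)"
    using eq t0 by blast
  then show ?thesis using SL_bas by simp
next
  case False
  define r0 where "r0 = (\<lambda>c::('a \<Rightarrow> rat) \<times> real. ((fst c)(v:=0), snd c))"
  define bnd where "bnd = (\<lambda>c::('a \<Rightarrow> rat) \<times> real. \<lambda>f. (snd c - lf ((fst c)(v:=0)) f) / of_rat (fst c v))"
  define pr where "pr = (\<lambda>z::(('a \<Rightarrow> rat) \<times> real) \<times> (('a \<Rightarrow> rat) \<times> real).
     ((\<lambda>u. inverse (fst (fst z) v) * ((fst (fst z))(v:=0)) u + (- inverse (fst (snd z) v)) * ((fst (snd z))(v:=0)) u),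
      snd (fst z) / of_rat (fst (fst z) v) - snd (snd z) / of_rat (fst (snd z) v)))"
  define P0 where "P0 = filter (\<lambda>c. fst c v = 0) P"
  define Pp where "Pp = filter (\<lambda>c. fst c v > 0) P"
  define Pn where "Pn = filter (\<lambda>c. fst c v < 0) P"
  have pos: "lf (fst c) (f(v:=t)) > snd c \<longleftrightarrow> t > bnd c f" if "fst c v > 0" for c f t
  proof -
    have k: "of_rat (fst c v) > (0::real)" using that by simp
    show ?thesis unfolding bnd_def lf_upd using k by (simp add: pos_divide_less_eq algebra_simps)
  qed
  have neg: "lf (fst c) (f(v:=t)) > snd c \<longleftrightarrow> t < bnd c f" if "fst c v < 0" for c f t
  proof -
    have k: "of_rat (fst c v) < (0::real)" using that by simp
    show ?thesis unfolding bnd_def lf_upd using k by (simp add: neg_less_divide_eq algebra_simps)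
  qed
  have zero: "lf (fst c) (f(v:=t)) = lf (fst (r0 c)) f" if "fst c v = 0" for c f t
    unfolding r0_def lf_upd using that by simp
  have prr: "bnd (fst z) f < bnd (snd z) f \<longleftrightarrow> lf (fst (pr z)) f > snd (pr z)" for z f
  proof -
    have lpr: "lf (fst (pr z)) f = of_rat (inverse (fst (fst z) v)) * lf ((fst (fst z))(v:=0)) f
       + of_rat (- inverse (fst (snd z) v)) * lf ((fst (snd z))(v:=0)) f"
      unfolding pr_def by (simp only: fst_conv lf_lin)
    show ?thesis unfolding lpr unfolding bnd_def pr_def snd_conv
      by (simp add: of_rat_inverse of_rat_minus diff_divide_distrib divide_inverse algebra_simps)
  qed
  have mem: "f(v:=t) \<in> bas P Q \<longleftrightarrow>
     (\<forall>c\<in>set P0. lf (fst (r0 c)) f > snd (r0 c)) \<and> (\<forall>c\<in>set Q. lf (fst (r0 c)) f = snd (r0 c)) \<and>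
     (\<forall>c\<in>set Pp. t > bnd c f) \<and> (\<forall>c\<in>set Pn. t < bnd c f)" for f t
  proof -
    have "(\<forall>c\<in>set P. lf (fst c) (f(v:=t)) > snd c) \<longleftrightarrow>
       (\<forall>c\<in>set P0. lf (fst (r0 c)) f > snd (r0 c)) \<and> (\<forall>c\<in>set Pp. t > bnd c f) \<and> (\<forall>c\<in>set Pn. t < bnd c f)"
      unfolding P0_def Pp_def Pn_def using pos neg zero
      by (auto simp: r0_def) (metis linorder_neqE_linordered_idom)
    moreover have "(\<forall>c\<in>set Q. lf (fst c) (f(v:=t)) = snd c) \<longleftrightarrow> (\<forall>c\<in>set Q. lf (fst (r0 c)) f = snd (r0 c))"
      using False zero by (auto simp: r0_def)
    ultimately show ?thesis unfolding mem_bas by blast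
  qed
  have ex: "(\<exists>t. (\<forall>c\<in>set Pp. t > bnd c f) \<and> (\<forall>c\<in>set Pn. t < bnd c f)) \<longleftrightarrow>
      (\<forall>z\<in>set (List.product Pp Pn). lf (fst (pr z)) f > snd (pr z))" for f
  proof
    assume "\<exists>t. (\<forall>c\<in>set Pp. t > bnd c f) \<and> (\<forall>c\<in>set Pn. t < bnd c f)"
    then obtain t where "\<forall>c\<in>set Pp. t > bnd c f" "\<forall>c\<in>set Pn. t < bnd c f" by blast
    then show "\<forall>z\<in>set (List.product Pp Pn). lf (fst (pr z)) f > snd (pr z)"
      using prr by fastforce
  next
    assume "\<forall>z\<in>set (List.product Pp Pn). lf (fst (pr z)) f > snd (pr z)"
    then have "\<forall>l\<in>(\<lambda>c. bnd c f) ` set Pp. \<forall>u\<in>(\<lambda>c. bnd c f) ` set Pn. l < u"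
      using prr by fastforce
    from exists_between[OF _ _ this] show "\<exists>t. (\<forall>c\<in>set Pp. t > bnd c f) \<and> (\<forall>c\<in>set Pn. t < bnd c f)"
      by auto
  qed
  have "{f. \<exists>t. f(v:=t) \<in> bas P Q} = bas (map r0 P0 @ map pr (List.product Pp Pn)) (map r0 Q)"
  proof (rule set_eqI)
    fix f
    show "f \<in> {f. \<exists>t. f(v:=t) \<in> bas P Q} \<longleftrightarrow> f \<in> bas (map r0 P0 @ map pr (List.product Pp Pn)) (map r0 Q)"
      unfolding mem_Collect_eq mem using ex[of f] unfolding mem_bas by auto
  qed
  then show ?thesis using SL_bas by simp
qed

lemma SL_ex1: assumes "SL T" shows "SL {f. \<exists>t. f(v:=t) \<in> T}"
proof -
  obtain L where T: "T = (\<Union>x\<in>set L. bas (fst x) (snd x))" using assms unfolding SL_def by blast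
  have "{f. \<exists>t. f(v:=t) \<in> T} = (\<Union>x\<in>set L. {f. \<exists>t. f(v:=t) \<in> bas (fst x) (snd x)})"
    unfolding T by blast
  then show ?thesis by (simp only:) (rule SL_UN_list, rule SL_ex1_bas)
qed

lemma SL_exS: assumes "SL T" shows "SL {f. \<exists>g. (\<forall>u. u \<notin> V \<longrightarrow> g u = f u) \<and> g \<in> T}"
proof -
  have "finite V" by simp
  then show ?thesis
  proof (induction V rule: finite_induct)
    case empty
    have "{f. \<exists>g. (\<forall>u. u \<notin> {} \<longrightarrow> g u = f u) \<and> g \<in> T} = T" by (auto simp: fun_eq_iff[symmetric])
    then show ?case using assms by simp
  next
    case (insert v V)
    have "{f. \<exists>g. (\<forall>u. u \<notin> insert v V \<longrightarrow> g u = f u) \<and> g \<in> T} =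
          {f. \<exists>t. f(v:=t) \<in> {f. \<exists>g. (\<forall>u. u \<notin> V \<longrightarrow> g u = f u) \<and> g \<in> T}}"
    proof (rule set_eqI, rule iffI)
      fix f assume "f \<in> {f. \<exists>g. (\<forall>u. u \<notin> insert v V \<longrightarrow> g u = f u) \<and> g \<in> T}"
      then obtain g where "\<forall>u. u \<notin> insert v V \<longrightarrow> g u = f u" "g \<in> T" by blast
      then show "f \<in> {f. \<exists>t. f(v:=t) \<in> {f. \<exists>g. (\<forall>u. u \<notin> V \<longrightarrow> g u = f u) \<and> g \<in> T}}"
        by (intro CollectI exI[of _ "g v"]) auto
    next
      fix f assume "f \<in> {f. \<exists>t. f(v:=t) \<in> {f. \<exists>g. (\<forall>u. u \<notin> V \<longrightarrow> g u = f u) \<and> g \<in> T}}"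
      then obtain t g where "\<forall>u. u \<notin> V \<longrightarrow> g u = (f(v:=t)) u" "g \<in> T" by blast
      then show "f \<in> {f. \<exists>g. (\<forall>u. u \<notin> insert v V \<longrightarrow> g u = f u) \<and> g \<in> T}"
        by (intro CollectI exI[of _ g]) auto
    qed
    then show ?case using SL_ex1[OF insert.IH] by simp
  qed
qed

lemma vnth_vl [simp]: "vec_nth (vec_lambda f) = f"
  by (simp add: vec_lambda_inverse)

lemma semilinear_set_SL: "semilinear_set S \<longleftrightarrow> SL {f. vec_lambda f \<in> S}"
proof -
  have bs: "basic_semilinear P Q = {x. vec_nth x \<in> bas P Q}" for P Q
    unfolding basic_semilinear_def bas_def lf_def by simp
  show ?thesis
  proof
    assume "semilinear_set S"
    then obtain L where L: "S = (\<Union>(P, Q) \<in> set L. basic_semilinear P Q)" unfolding semilinear_set_def by blast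
    have "{f. vec_lambda f \<in> S} = (\<Union>x\<in>set L. bas (fst x) (snd x))"
      unfolding L bs by (auto simp: split_beta)
    then show "SL {f. vec_lambda f \<in> S}" unfolding SL_def by blast
  next
    assume "SL {f. vec_lambda f \<in> S}"
    then obtain L where L: "{f. vec_lambda f \<in> S} = (\<Union>x\<in>set L. bas (fst x) (snd x))" unfolding SL_def by blast
    have "S = (\<Union>(P, Q) \<in> set L. basic_semilinear P Q)"
    proof (rule set_eqI)
      fix x :: "real ^ 'a"
      have "x \<in> S \<longleftrightarrow> vec_nth x \<in> {f. vec_lambda f \<in> S}" by (simp add: vec_nth_inverse)
      also have "\<dots> \<longleftrightarrow> x \<in> (\<Union>(P, Q) \<in> set L. basic_semilinear P Q)"
        unfolding L bs by (auto simp: split_beta)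
      finally show "x \<in> S \<longleftrightarrow> x \<in> (\<Union>(P, Q) \<in> set L. basic_semilinear P Q)" .
    qed
    then show "semilinear_set S" unfolding semilinear_set_def by blast
  qed
qed

lemma graph_mem: "vec_lambda g \<in> graph_vec F \<longleftrightarrow> (\<chi> i. g (Inr i)) = F (\<chi> i. g (Inl i))"
  by (simp add: graph_vec_def)

lemma SL_INT_UNIV: "(\<And>i. SL (T i)) \<Longrightarrow> SL (\<Inter>i. T (i::'a::finite))"
  using SL_INT[of UNIV T] by simp

lemma scal_add_nth [simp]: "scal_add c x $ i = c + x $ i"
  by (simp add: scal_add_def)

lemma mono_homog_lip:
  fixes F :: "real ^ 'n \<Rightarrow> real ^ 'n"
  assumes "mono F" "homogeneous_op F"
  shows "F x $ i \<le> norm (x - y) + F y $ i"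
proof -
  have "x \<le> scal_add (norm (x - y)) y"
    unfolding less_eq_vec_def
  proof
    fix j
    have "\<bar>(x - y) $ j\<bar> \<le> norm (x - y)" by (rule component_le_norm_cart)
    then show "x $ j \<le> scal_add (norm (x - y)) y $ j" by simp
  qed
  then have "F x \<le> F (scal_add (norm (x - y)) y)" by (rule monoD[OF assms(1)])
  also have "\<dots> = scal_add (norm (x - y)) (F y)" using assms(2) unfolding homogeneous_op_def by simp
  finally show ?thesis unfolding less_eq_vec_def by simp
qed

lemma mono_homog_cont:
  fixes F :: "real ^ 'n \<Rightarrow> real ^ 'n"
  assumes "mono F" "homogeneous_op F"
  shows "continuous_on UNIV (\<lambda>x. F x $ i)"
  unfolding continuous_on_iff
proof (intro ballI allI impI)
  fix x e :: real assume "e > 0"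
  fix x :: "real ^ 'n"
  show "\<exists>d>0. \<forall>x'\<in>UNIV. dist x' x < d \<longrightarrow> dist (F x' $ i) (F x $ i) < e"
  proof (intro exI[of _ e] conjI ballI impI)
    fix x' assume "dist x' x < e"
    moreover have "F x' $ i \<le> norm (x' - x) + F x $ i" "F x $ i \<le> norm (x - x') + F x' $ i"
      using mono_homog_lip[OF assms] by auto
    moreover have "norm (x - x') = norm (x' - x)" by (rule norm_minus_commute)
    ultimately show "dist (F x' $ i) (F x $ i) < e" by (simp add: dist_norm dist_real_def)
  qed (rule \<open>e > 0\<close>)
qed

lemma from_F:
  fixes F :: "real ^ 'n \<Rightarrow> real ^ 'n"
  assumes sF: "semilinear_fun F" and mF: "mono F" and hF: "homogeneous_op F"
  shows "closed {x. x \<le> F x} \<and> semilinear_set {x. x \<le> F x} \<and> tropical_cone {x. x \<le> F x}"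
proof (intro conjI)
  have "{x. x \<le> F x} = (\<Inter>i. {x. x $ i \<le> F x $ i})" by (auto simp: less_eq_vec_def)
  moreover have "closed {x. x $ i \<le> F x $ i}" for i
    by (rule closed_Collect_le) (auto intro: continuous_on_component mono_homog_cont[OF mF hF])
  ultimately show "closed {x. x \<le> F x}" by auto
next
  show "tropical_cone {x. x \<le> F x}"
    unfolding tropical_cone_def
  proof (intro ballI allI)
    fix x y :: "real ^ 'n" and a b :: real
    assume x: "x \<in> {x. x \<le> F x}" and y: "y \<in> {x. x \<le> F x}"
    define z where "z = (\<chi> i. max (a + x $ i) (b + y $ i))"
    have "scal_add a x \<le> z" "scal_add b y \<le> z" unfolding z_def less_eq_vec_def by auto
    then have "F (scal_add a x) \<le> F z" "F (scal_add b y) \<le> F z" using mF by (auto dest: monoD)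
    then have "scal_add a (F x) \<le> F z" "scal_add b (F y) \<le> F z" using hF unfolding homogeneous_op_def by auto
    moreover have "x \<le> F x" "y \<le> F y" using x y by auto
    ultimately have h1: "a + F x $ i \<le> F z $ i" "b + F y $ i \<le> F z $ i" "x$i \<le> F x $ i" "y $i \<le> F y $i" for i
      unfolding less_eq_vec_def by auto
    have zi: "z $ i = max (a + x $ i) (b + y $ i)" for i by (simp add: z_def)
    have "z $ i \<le> F z $ i" for i
      unfolding zi max.bounded_iff using h1[of i] by (intro conjI; linarith)
    then have "z \<le> F z" unfolding less_eq_vec_def by blast
    then show "(\<chi> i. max (a + x $ i) (b + y $ i)) \<in> {x. x \<le> F x}" unfolding z_def by simp
  qed
next
  define W where "W = {g::('n+'n) \<Rightarrow> real. vec_lambda g \<in> graph_vec F} \<inter> (\<Inter>i. {g. g (Inl i) \<le> g (Inr i)})"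
  have "SL W" unfolding W_def
    using sF unfolding semilinear_fun_def semilinear_set_SL
    by (intro SL_Int SL_INT_UNIV SL_var_le)
  define E where "E = {f. \<exists>g. (\<forall>u. u \<notin> range Inr \<longrightarrow> g u = f u) \<and> g \<in> W}"
  have "SL E" unfolding E_def by (rule SL_exS) fact
  define \<sigma> where "\<sigma> = (case_sum id id :: ('n+'n) \<Rightarrow> 'n)"
  have "SL {h. h \<circ> \<sigma> \<in> E}" by (rule SL_comp) fact
  moreover have "{h. h \<circ> \<sigma> \<in> E} = {h. vec_lambda h \<in> {x. x \<le> F x}}"
  proof (rule set_eqI, rule iffI)
    fix h assume "h \<in> {h. h \<circ> \<sigma> \<in> E}"
    then obtain g where g1: "\<forall>u. u \<notin> range Inr \<longrightarrow> g u = (h \<circ> \<sigma>) u" and g2: "g \<in> W" unfolding E_def by blast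
    have gl: "g (Inl i) = h i" for i using g1 unfolding \<sigma>_def by auto
    have "(\<chi> i. g (Inr i)) = F (\<chi> i. g (Inl i))" "\<forall>i. g (Inl i) \<le> g (Inr i)"
      using g2 unfolding W_def graph_mem by auto
    moreover have "(\<chi> i. g (Inl i)) = vec_lambda h" using gl by simp
    ultimately have eqF: "F (vec_lambda h) = (\<chi> i. g (Inr i))" and le: "\<forall>i. g (Inl i) \<le> g (Inr i)" by auto
    show "h \<in> {h. vec_lambda h \<in> {x. x \<le> F x}}" unfolding mem_Collect_eq less_eq_vec_def eqF
      using le gl by simp
  next
    fix h assume h: "h \<in> {h. vec_lambda h \<in> {x. x \<le> F x}}"
    define g where "g = case_sum h (\<lambda>i. F (vec_lambda h) $ i)"
    have "g \<in> W" using h unfolding W_def graph_mem g_def less_eq_vec_def by (simp add: vec_nth_inverse)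
    moreover have "\<forall>u. u \<notin> range Inr \<longrightarrow> g u = (h \<circ> \<sigma>) u" unfolding g_def \<sigma>_def
      by (auto split: sum.splits)
    ultimately show "h \<in> {h. h \<circ> \<sigma> \<in> E}" unfolding E_def by blast
  qed
  ultimately show "semilinear_set {x. x \<le> F x}" unfolding semilinear_set_SL by simp
qed

lemma empty_case:
  "\<exists>F :: real ^ 'n \<Rightarrow> real ^ 'n. semilinear_fun F \<and> mono F \<and> homogeneous_op F \<and> ({}::(real^'n) set) = {x. x \<le> F x}"
proof -
  define i0 :: 'n where "i0 = undefined"
  define F :: "real ^ 'n \<Rightarrow> real ^ 'n" where "F = (\<lambda>x. \<chi> i. x $ i0 - 1)"
  have "mono F" unfolding F_def by (rule monoI) (simp add: less_eq_vec_def)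
  moreover have "homogeneous_op F" unfolding F_def homogeneous_op_def by (simp add: vec_eq_iff)
  moreover have "{} = {x. x \<le> F x}"
  proof -
    have "\<not> x \<le> F x" for x
    proof
      assume "x \<le> F x"
      then have "x $ i0 \<le> x $ i0 - 1" unfolding F_def less_eq_vec_def by simp
      then show False by simp
    qed
    then show ?thesis by blast
  qed
  moreover have "semilinear_fun F"
  proof -
    have "{g::('n+'n) \<Rightarrow> real. vec_lambda g \<in> graph_vec F} = (\<Inter>i. {g. g (Inr i) = g (Inl i0) + (-1)})"
      unfolding graph_mem F_def by (auto simp: vec_eq_iff)
    moreover have "SL (\<Inter>i. {g::('n+'n) \<Rightarrow> real. g (Inr i) = g (Inl i0) + (-1)})"
      by (intro SL_INT_UNIV SL_var_eq_plus)
    ultimately show ?thesis unfolding semilinear_fun_def semilinear_set_SL by simp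
  qed
  ultimately show ?thesis by blast
qed

lemma cone_shift: "tropical_cone S \<Longrightarrow> x \<in> S \<Longrightarrow> scal_add c x \<in> S"
proof -
  assume c: "tropical_cone S" and x: "x \<in> S"
  have "(\<chi> i. max (c + x $ i) (c + x $ i)) \<in> S" using c x unfolding tropical_cone_def by blast
  then show ?thesis unfolding scal_add_def by simp
qed

lemma cone_max: "tropical_cone S \<Longrightarrow> x \<in> S \<Longrightarrow> y \<in> S \<Longrightarrow> (\<chi> i. max (x $ i) (y $ i)) \<in> S"
proof -
  assume c: "tropical_cone S" and x: "x \<in> S" and y: "y \<in> S"
  have "(\<chi> i. max (0 + x $ i) (0 + y $ i)) \<in> S" using c x y unfolding tropical_cone_def by blast
  then show ?thesis by simp
qed

lemma greatest_exists:
  fixes S :: "(real ^ 'n) set"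
  assumes cl: "closed S" and cone: "tropical_cone S" and ne: "S \<noteq> {}"
  shows "\<exists>y. y \<in> S \<and> y \<le> x \<and> (\<forall>z\<in>S. z \<le> x \<longrightarrow> z \<le> y)"
proof -
  obtain s where s: "s \<in> S" using ne by blast
  define c where "c = Min (range (\<lambda>i. x $ i - s $ i))"
  define lo where "lo = scal_add c s"
  have lo: "lo \<in> S" unfolding lo_def by (rule cone_shift[OF cone s])
  have lox: "lo \<le> x" unfolding lo_def less_eq_vec_def c_def
  proof
    fix i
    have "Min (range (\<lambda>i. x $ i - s $ i)) \<le> x $ i - s $ i" by (rule Min_le) auto
    then show "scal_add (Min (range (\<lambda>i. x $ i - s $ i))) s $ i \<le> x $ i" by (simp only: scal_add_nth; linarith)
  qed
  define K where "K = S \<inter> {lo..x}"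
  have "compact K" unfolding K_def interval_cbox_cart by (intro closed_Int_compact cl compact_cbox)
  moreover have "K \<noteq> {}" using lo lox unfolding K_def by auto
  moreover have "continuous_on K (\<lambda>y. \<Sum>i\<in>UNIV. y $ i)"
    by (intro continuous_intros)
  ultimately obtain y where y: "y \<in> K" and ymax: "\<forall>w\<in>K. (\<Sum>i\<in>UNIV. w $ i) \<le> (\<Sum>i\<in>UNIV. y $ i)"
    using continuous_attains_sup by blast
  have yS: "y \<in> S" and ylo: "lo \<le> y" and yx: "y \<le> x" using y unfolding K_def by auto
  have "z \<le> y" if z: "z \<in> S" "z \<le> x" for z
  proof -
    define w where "w = (\<chi> i. max (z $ i) (y $ i))"
    have wS: "w \<in> S" unfolding w_def by (rule cone_max[OF cone z(1) yS])
    have yw: "y \<le> w" unfolding w_def less_eq_vec_def by simp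
    have wx: "w \<le> x" using z(2) yx unfolding w_def less_eq_vec_def by simp
    have "w \<in> K" unfolding K_def using wS wx ylo yw by (auto intro: order.trans)
    then have "(\<Sum>i\<in>UNIV. w $ i) \<le> (\<Sum>i\<in>UNIV. y $ i)" using ymax by blast
    then have "(\<Sum>i\<in>UNIV. w $ i - y $ i) \<le> 0" by (simp add: sum_subtractf)
    moreover have "\<forall>i\<in>UNIV. 0 \<le> w $ i - y $ i" using yw unfolding less_eq_vec_def by simp
    ultimately have "\<forall>i\<in>UNIV. w $ i - y $ i = 0"
      using sum_nonneg_eq_0_iff[of UNIV "\<lambda>i. w $ i - y $ i"] sum_nonneg[of UNIV "\<lambda>i. w $ i - y $ i"] by simp
    then have "w = y" by (simp add: vec_eq_iff)
    moreover have "z $ i \<le> w $ i" for i unfolding w_def by simp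
    ultimately show "z \<le> y" unfolding less_eq_vec_def by simp
  qed
  then show ?thesis using yS yx by blast
qed

lemma nonempty_case:
  fixes S :: "(real ^ 'n) set"
  assumes cl: "closed S" and sl: "semilinear_set S" and cone: "tropical_cone S" and ne: "S \<noteq> {}"
  shows "\<exists>F :: real ^ 'n \<Rightarrow> real ^ 'n. semilinear_fun F \<and> mono F \<and> homogeneous_op F \<and> S = {x. x \<le> F x}"
proof -
  define G where "G = (\<lambda>x y. y \<in> S \<and> y \<le> x \<and> (\<forall>z\<in>S. z \<le> x \<longrightarrow> z \<le> y))"
  define P where "P = (\<lambda>x. SOME y. G x y)"
  have PG: "G x (P x)" for x unfolding P_def
    by (rule someI_ex) (use greatest_exists[OF cl cone ne] in \<open>auto simp: G_def\<close>)
  have Guniq: "G x y \<longleftrightarrow> y = P x" for x y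
  proof
    assume "G x y"
    then have "y \<le> P x" "P x \<le> y" using PG[of x] unfolding G_def by auto
    then show "y = P x" by (rule order.antisym)
  qed (use PG in simp)
  have PS: "P x \<in> S" "P x \<le> x" "\<And>z. z \<in> S \<Longrightarrow> z \<le> x \<Longrightarrow> z \<le> P x" for x
    using PG[of x] unfolding G_def by auto
  have "mono P"
  proof (rule monoI)
    fix x x' :: "real ^ 'n" assume "x \<le> x'"
    then show "P x \<le> P x'" using PS(1,2)[of x] PS(3)[of "P x" x'] by (auto intro: order.trans)
  qed
  moreover have "homogeneous_op P" unfolding homogeneous_op_def
  proof (intro allI)
    fix c x
    have "G (scal_add c x) (scal_add c (P x))" unfolding G_def
    proof (intro conjI ballI impI)
      show "scal_add c (P x) \<in> S" by (rule cone_shift[OF cone PS(1)])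
      show "scal_add c (P x) \<le> scal_add c x" using PS(2)[of x] by (simp add: less_eq_vec_def)
      fix z assume z: "z \<in> S" "z \<le> scal_add c x"
      have "scal_add (-c) z \<in> S" by (rule cone_shift[OF cone z(1)])
      moreover have "scal_add (-c) z \<le> x" using z(2) by (auto simp: less_eq_vec_def algebra_simps)
      ultimately have "scal_add (-c) z \<le> P x" by (rule PS(3))
      then show "z \<le> scal_add c (P x)" by (auto simp: less_eq_vec_def algebra_simps)
    qed
    then show "P (scal_add c x) = scal_add c (P x)" using Guniq by simp
  qed
  moreover have "S = {x. x \<le> P x}"
  proof (intro set_eqI iffI)
    fix x assume "x \<in> S" then show "x \<in> {x. x \<le> P x}" using PS(3)[of x x] by simp
  next
    fix x assume "x \<in> {x. x \<le> P x}"
    then have "x = P x" using PS(2)[of x] by (auto intro: order.antisym)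
    then show "x \<in> S" using PS(1)[of x] by simp
  qed
  moreover have "semilinear_fun P"
  proof -
    define Sf where "Sf = {f. vec_lambda f \<in> S}"
    have SLS: "SL Sf" using sl unfolding Sf_def semilinear_set_SL .
    define A where "A = {f::(('n+'n)+'n) \<Rightarrow> real. f \<circ> Inr \<in> Sf} \<inter> (\<Inter>i. {f. f (Inr i) \<le> f (Inl (Inl i))})
         \<inter> - (\<Inter>i. {f. f (Inr i) \<le> f (Inl (Inr i))})"
    have "SL A" unfolding A_def
      by (intro SL_Int SL_compl SL_comp SLS SL_INT_UNIV SL_var_le)
    define B where "B = {f. \<exists>g. (\<forall>u. u \<notin> range Inr \<longrightarrow> g u = f u) \<and> g \<in> A}"
    have "SL B" unfolding B_def by (rule SL_exS) fact
    define C where "C = - B \<inter> {f. f \<circ> (Inl \<circ> Inr) \<in> Sf} \<inter> (\<Inter>i. {f. f (Inl (Inr i)) \<le> f (Inl (Inl i))})"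
    have "SL C" unfolding C_def
      by (intro SL_Int SL_compl SL_comp SLS SL_INT_UNIV SL_var_le) fact
    define \<sigma> where "\<sigma> = (case_sum id Inl :: (('n+'n)+'n) \<Rightarrow> ('n+'n))"
    have "SL {h. h \<circ> \<sigma> \<in> C}" by (rule SL_comp) fact
    moreover have "{h. h \<circ> \<sigma> \<in> C} = {h. vec_lambda h \<in> graph_vec P}"
    proof (rule set_eqI)
      fix h :: "('n+'n) \<Rightarrow> real"
      define x where "x = (\<chi> i. h (Inl i))"
      define y where "y = (\<chi> i. h (Inr i))"
      have "h \<circ> \<sigma> \<in> B \<longleftrightarrow> (\<exists>z\<in>S. z \<le> x \<and> \<not> z \<le> y)"
      proof
        assume "h \<circ> \<sigma> \<in> B"
        then obtain g where g1: "\<forall>u. u \<notin> range Inr \<longrightarrow> g u = (h \<circ> \<sigma>) u" and g2: "g \<in> A" unfolding B_def by blast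
        have gl: "g (Inl a) = h a" for a using g1 unfolding \<sigma>_def by (cases a) auto
        define z where "z = (\<chi> i. g (Inr i))"
        have "g \<circ> Inr \<in> Sf" "\<forall>i. g (Inr i) \<le> g (Inl (Inl i))" "\<not> (\<forall>i. g (Inr i) \<le> g (Inl (Inr i)))"
          using g2 unfolding A_def by auto
        then have "z \<in> S" "z \<le> x" "\<not> z \<le> y"
          unfolding Sf_def z_def x_def y_def less_eq_vec_def gl by (auto simp: o_def)
        then show "\<exists>z\<in>S. z \<le> x \<and> \<not> z \<le> y" by blast
      next
        assume "\<exists>z\<in>S. z \<le> x \<and> \<not> z \<le> y"
        then obtain z where z: "z \<in> S" "z \<le> x" "\<not> z \<le> y" by blast
        define g where "g = case_sum h (\<lambda>i. z $ i)"
        have "g \<circ> Inr = vec_nth z" unfolding g_def by (auto simp: fun_eq_iff)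
        then have "g \<circ> Inr \<in> Sf" unfolding Sf_def using z(1) by (simp add: vec_nth_inverse)
        moreover have "\<forall>i. g (Inr i) \<le> g (Inl (Inl i))" "\<not> (\<forall>i. g (Inr i) \<le> g (Inl (Inr i)))"
          using z(2,3) unfolding g_def x_def y_def less_eq_vec_def by auto
        ultimately have "g \<in> A" unfolding A_def by auto
        moreover have "\<forall>u. u \<notin> range Inr \<longrightarrow> g u = (h \<circ> \<sigma>) u" unfolding g_def \<sigma>_def
          by (auto split: sum.splits)
        ultimately show "h \<circ> \<sigma> \<in> B" unfolding B_def by blast
      qed
      moreover have "h \<circ> \<sigma> \<circ> (Inl \<circ> Inr) \<in> Sf \<longleftrightarrow> y \<in> S"
      proof -
        have "h \<circ> \<sigma> \<circ> (Inl \<circ> Inr) = (\<lambda>i. h (Inr i))" unfolding \<sigma>_def by (auto simp: fun_eq_iff)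
        then show ?thesis unfolding Sf_def y_def by simp
      qed
      moreover have "(\<forall>i. (h \<circ> \<sigma>) (Inl (Inr i)) \<le> (h \<circ> \<sigma>) (Inl (Inl i))) \<longleftrightarrow> y \<le> x"
        unfolding \<sigma>_def x_def y_def less_eq_vec_def by simp
      moreover have "vec_lambda h \<in> graph_vec P \<longleftrightarrow> G x y"
        unfolding graph_mem Guniq x_def y_def by auto
      ultimately show "h \<in> {h. h \<circ> \<sigma> \<in> C} \<longleftrightarrow> h \<in> {h. vec_lambda h \<in> graph_vec P}"
        unfolding C_def G_def by auto
    qed
    ultimately show ?thesis unfolding semilinear_fun_def semilinear_set_SL by simp
  qed
  ultimately show ?thesis by blast
qed

theorem mainTheorem10:
  fixes S :: "(real ^ 'n) set"
  shows "(closed S \<and> semilinear_set S \<and> tropical_cone S) \<longleftrightarrow>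
    (\<exists>F :: real ^ 'n \<Rightarrow> real ^ 'n.
        semilinear_fun F \<and> mono F \<and> homogeneous_op F \<and> S = {x. x \<le> F x})"
proof
  assume "closed S \<and> semilinear_set S \<and> tropical_cone S"
  then show "\<exists>F :: real ^ 'n \<Rightarrow> real ^ 'n. semilinear_fun F \<and> mono F \<and> homogeneous_op F \<and> S = {x. x \<le> F x}"
    using nonempty_case[of S] empty_case by (cases "S = {}") auto
next
  assume "\<exists>F :: real ^ 'n \<Rightarrow> real ^ 'n. semilinear_fun F \<and> mono F \<and> homogeneous_op F \<and> S = {x. x \<le> F x}"
  then obtain F :: "real ^ 'n \<Rightarrow> real ^ 'n" where "semilinear_fun F" "mono F" "homogeneous_op F" "S = {x. x \<le> F x}"
    by blast
  then show "closed S \<and> semilinear_set S \<and> tropical_cone S" using from_F by blast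
qed

end
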